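(* Let a graph grammar (a finite set of substitutions $Sub_i=(\Gamma_i,\Gamma_i',V_{i,0},\varphi_i)$, $i=1,\dots,r$) be local, locally bounded and respect connectivity, and let $n$ be sufficiently large, with $G(0)\in GC_n$. Then the grammar is metrically bounded from above: there exists a constant $C=C(n)>0$ such that for each spin graph $\alpha=(G,s)$ (with $G\in GC_n$), each pair of vertices $x,y\in V(G)$ and each transformation $T=T(Sub_i,\psi)$ applicable to $\alpha$, $$d_{TG}(x,y)\le d_G(x,y)+C,$$ where $TG$ denotes the graph of $T\alpha$.
   Context: Graphs are non-directed, connected, with at most one edge between any two vertices and every vertex of finite degree. $GF_n$ (resp. $GC_n$) is the set of finite (resp. countable) such graphs in which every vertex has degree at most $n$. $d_G(x,y)$ is the graph distance (minimal number of edges of a path from $x$ to $y$) in $G$. A spin graph is a pair $\alpha=(G,s)$ with $s:V(G)\to S$ for a fixed alphabet $S$. A substitution rule $Sub=(\Gamma,\Gamma',V_0,\varphi)$ consists of two finite spin graphs $\Gamma,\Gamma'$, a subset $V_0\subset V(\Gamma)$ and a map $\varphi:V_0\to V(\Gamma')$ ($V_0$ and $\Gamma'$ may be empty). Given an isomorphism of spin graphs $\psi:\Gamma\to\Gamma_1$ onto a spin subgraph $\Gamma_1$ of $\alpha$, the transformation $T(Sub,\psi)\alpha$ is obtained by: taking the disjoint union of $\alpha$ and $\Gamma'$, deleting all links of $\Gamma_1$, deleting all vertices of $\psi(V(\Gamma))\setminus\psi(V_0)$ together with their incident links, and identifying each $\psi(v)$, $v\in V_0$, with $\varphi(v)\in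 V(\Gamma')$; spins outside $\Gamma_1$ are inherited from $\alpha$ and on $V(\Gamma')$ from $\Gamma'$. A graph grammar is a finite set of substitutions; it is local if every $\Gamma_i$ is connected; it is locally bounded if, for all sufficiently large $n$, the sets $GF_n$ and $GC_n$ are invariant under all its substitutions; it respects connectivity if $T(Sub_i,\psi)\alpha$ is connected whenever $\alpha$ is connected, for all possible $i,\psi$. *)

theory Defs
  imports Main "HOL-Library.Extended_Nat" "HOL-Library.Countable_Set"
begin

record ('a, 's) sgraph =
  verts :: "'a set"
  adj   :: "('a \<times> 'a) set"
  spin  :: "'a \<Rightarrow> 's"

definition simple :: "('a, 's) sgraph \<Rightarrow> bool" where
  "simple G \<longleftrightarrow> adj G \<subseteq> verts G \<times> verts G \<and> sym (adj G) \<and> irrefl (adj G)"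

definition connected_g :: "('a, 's) sgraph \<Rightarrow> bool" where
  "connected_g G \<longleftrightarrow> (\<forall>x\<in>verts G. \<forall>y\<in>verts G. (x, y) \<in> (adj G)\<^sup>*)"

definition nbrs :: "('a, 's) sgraph \<Rightarrow> 'a \<Rightarrow> 'a set" where
  "nbrs G x = {y. (x, y) \<in> adj G}"

definition deg :: "('a, 's) sgraph \<Rightarrow> 'a \<Rightarrow> nat" where
  "deg G x = card (nbrs G x)"

definition is_graph :: "('a, 's) sgraph \<Rightarrow> bool" where
  "is_graph G \<longleftrightarrow> simple G \<and> connected_g G \<and> (\<forall>x\<in>verts G. finite (nbrs G x))"

definition in_GF :: "nat \<Rightarrow> ('a, 's) sgraph \<Rightarrow> bool" where
  "in_GF n G \<longleftrightarrow> is_graph G \<and> finite (verts G) \<and> (\<forall>x\<in>verts G. deg G x \<le> n)"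

definition in_GC :: "nat \<Rightarrow> ('a, 's) sgraph \<Rightarrow> bool" where
  "in_GC n G \<longleftrightarrow> is_graph G \<and> countable (verts G) \<and> (\<forall>x\<in>verts G. deg G x \<le> n)"

text \<open>Graph distance (minimal number of edges of a path), \<open>\<infinity>\<close> if there is no path.\<close>
definition gdist :: "('a, 's) sgraph \<Rightarrow> 'a \<Rightarrow> 'a \<Rightarrow> enat" where
  "gdist G x y = (INF k \<in> {k. (x, y) \<in> adj G ^^ k}. enat k)"

record ('g, 'b, 's) subst =
  Gam  :: "('g, 's) sgraph"
  Gam' :: "('b, 's) sgraph"
  V0   :: "'g set"
  phi  :: "'g \<Rightarrow> 'b"

definition valid_subst :: "('g, 'b, 's) subst \<Rightarrow> bool" where
  "valid_subst Sub \<longleftrightarrow>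
     simple (Gam Sub) \<and> finite (verts (Gam Sub)) \<and>
     simple (Gam' Sub) \<and> finite (verts (Gam' Sub)) \<and>
     V0 Sub \<subseteq> verts (Gam Sub) \<and> phi Sub ` V0 Sub \<subseteq> verts (Gam' Sub)"

definition spin_subgraph :: "('a, 's) sgraph \<Rightarrow> ('a, 's) sgraph \<Rightarrow> bool" where
  "spin_subgraph H G \<longleftrightarrow> verts H \<subseteq> verts G \<and> adj H \<subseteq> adj G \<and>
     (\<forall>x\<in>verts H. spin H x = spin G x)"

definition spin_iso :: "('g \<Rightarrow> 'a) \<Rightarrow> ('g, 's) sgraph \<Rightarrow> ('a, 's) sgraph \<Rightarrow> bool" where
  "spin_iso \<psi> H K \<longleftrightarrow> bij_betw \<psi> (verts H) (verts K) \<and>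
     (\<forall>u\<in>verts H. \<forall>v\<in>verts H. ((u, v) \<in> adj H \<longleftrightarrow> (\<psi> u, \<psi> v) \<in> adj K)) \<and>
     (\<forall>u\<in>verts H. spin K (\<psi> u) = spin H u)"

definition img_graph :: "('g \<Rightarrow> 'a) \<Rightarrow> ('g, 's) sgraph \<Rightarrow> ('a, 's) sgraph \<Rightarrow> ('a, 's) sgraph" where
  "img_graph \<psi> H G = \<lparr>verts = \<psi> ` verts H, adj = {(\<psi> u, \<psi> v) | u v. (u, v) \<in> adj H},
     spin = spin G\<rparr>"

definition applicable :: "('g, 'b, 's) subst \<Rightarrow> ('g \<Rightarrow> 'a) \<Rightarrow> ('a, 's) sgraph \<Rightarrow> bool" where
  "applicable Sub \<psi> G \<longleftrightarrow>
     (\<exists>\<Gamma>\<^sub>1. spin_subgraph \<Gamma>\<^sub>1 G \<and> spin_iso \<psi> (Gam Sub) \<Gamma>\<^sub>1)"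

definition deleted :: "('g, 'b, 's) subst \<Rightarrow> ('g \<Rightarrow> 'a) \<Rightarrow> 'a set" where
  "deleted Sub \<psi> = \<psi> ` verts (Gam Sub) - \<psi> ` V0 Sub"

definition pre_verts :: "('g, 'b, 's) subst \<Rightarrow> ('g \<Rightarrow> 'a) \<Rightarrow> ('a, 's) sgraph \<Rightarrow> ('a + 'b) set" where
  "pre_verts Sub \<psi> G = Inl ` (verts G - deleted Sub \<psi>) \<union> Inr ` verts (Gam' Sub)"

definition pre_adj :: "('g, 'b, 's) subst \<Rightarrow> ('g \<Rightarrow> 'a) \<Rightarrow> ('a, 's) sgraph \<Rightarrow> (('a + 'b) \<times> ('a + 'b)) set" where
  "pre_adj Sub \<psi> G =
     {(Inl a, Inl b) | a b. (a, b) \<in> adj G - adj (img_graph \<psi> (Gam Sub) G)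
                            \<and> a \<notin> deleted Sub \<psi> \<and> b \<notin> deleted Sub \<psi>}
     \<union> {(Inr a, Inr b) | a b. (a, b) \<in> adj (Gam' Sub)}"

definition glue_rel :: "('g, 'b, 's) subst \<Rightarrow> ('g \<Rightarrow> 'a) \<Rightarrow> ('a, 's) sgraph \<Rightarrow> (('a + 'b) \<times> ('a + 'b)) set" where
  "glue_rel Sub \<psi> G =
     (let R = {(Inl (\<psi> v), Inr (phi Sub v)) | v. v \<in> V0 Sub}
      in (R \<union> R\<inverse> \<union> Id_on (pre_verts Sub \<psi> G))\<^sup>*)"

text \<open>The vertex of \<open>T\<alpha>\<close> corresponding to a (non-deleted) vertex \<open>x\<close> of \<open>\<alpha>\<close>.\<close>
definition cls :: "('g, 'b, 's) subst \<Rightarrow> ('g \<Rightarrow> 'a) \<Rightarrow> ('a, 's) sgraph \<Rightarrow> 'a \<Rightarrow> ('a + 'b) set" where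
  "cls Sub \<psi> G x = glue_rel Sub \<psi> G `` {Inl x}"

definition transform :: "('g, 'b, 's) subst \<Rightarrow> ('g \<Rightarrow> 'a) \<Rightarrow> ('a, 's) sgraph \<Rightarrow> (('a + 'b) set, 's) sgraph" where
  "transform Sub \<psi> G =
     (let Vs = pre_verts Sub \<psi> G // glue_rel Sub \<psi> G
      in \<lparr>verts = Vs,
          adj = {(A, B). A \<in> Vs \<and> B \<in> Vs \<and> (\<exists>a\<in>A. \<exists>b\<in>B. (a, b) \<in> pre_adj Sub \<psi> G)},
          spin = (\<lambda>A. if \<exists>w. Inr w \<in> A then spin (Gam' Sub) (SOME w. Inr w \<in> A)
                      else spin G (SOME a. Inl a \<in> A))\<rparr>)"

text \<open>A graph grammar is a finite list of substitutions; graphs \<open>\<alpha>\<close> are countable, so we take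
  their vertices in \<open>nat\<close>.\<close>

definition local_grammar :: "('g, 'b, 's) subst list \<Rightarrow> bool" where
  "local_grammar subs \<longleftrightarrow> (\<forall>i<length subs. connected_g (Gam (subs ! i)))"

definition locally_bounded :: "('g, 'b, 's) subst list \<Rightarrow> bool" where
  "locally_bounded subs \<longleftrightarrow> (\<exists>N. \<forall>n\<ge>N. \<forall>i<length subs. \<forall>\<psi> (G :: (nat, 's) sgraph).
     applicable (subs ! i) \<psi> G \<longrightarrow>
       (in_GF n G \<longrightarrow> in_GF n (transform (subs ! i) \<psi> G)) \<and>
       (in_GC n G \<longrightarrow> in_GC n (transform (subs ! i) \<psi> G)))"

definition respects_connectivity :: "('g, 'b, 's) subst list \<Rightarrow> bool" where
  "respects_connectivity subs \<longleftrightarrow> (\<forall>i<length subs. \<forall>\<psi> (G :: (nat, 's) sgraph).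
     is_graph G \<and> applicable (subs ! i) \<psi> G \<longrightarrow> connected_g (transform (subs ! i) \<psi> G))"

end

theory Submission
  imports Defs
begin

definition Psi :: "('g, 'b, 's) subst \<Rightarrow> ('g \<Rightarrow> 'a) \<Rightarrow> 'a set" where
  "Psi Sub \<psi> = \<psi> ` verts (Gam Sub)"

definition ballset :: "('g, 'b, 's) subst \<Rightarrow> ('g \<Rightarrow> 'a) \<Rightarrow> ('a, 's) sgraph \<Rightarrow> 'a set" where
  "ballset Sub \<psi> G = Psi Sub \<psi> \<union> (\<Union>p\<in>Psi Sub \<psi>. nbrs G p)"

lemma relpow_mono_sub: "(R::('a\<times>'a) set) \<subseteq> S \<Longrightarrow> R ^^ n \<subseteq> S ^^ n"
  by (induction n) (auto simp: relcomp_mono)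

lemma glue_indep:
  "glue_rel Sub \<psi> G = ({(Inl (\<psi> v), Inr (phi Sub v)) | v. v \<in> V0 Sub} \<union>
      {(Inl (\<psi> v), Inr (phi Sub v)) | v. v \<in> V0 Sub}\<inverse>)\<^sup>*"
proof -
  define S where "S = {(Inl (\<psi> v), Inr (phi Sub v)) | v. v \<in> V0 Sub} \<union>
      {(Inl (\<psi> v), Inr (phi Sub v)) | v. v \<in> V0 Sub}\<inverse>"
  have "(S \<union> Id_on (pre_verts Sub \<psi> G))\<^sup>* = S\<^sup>*"
  proof
    have "S \<union> Id_on (pre_verts Sub \<psi> G) \<subseteq> S\<^sup>*" by auto
    then have "(S \<union> Id_on (pre_verts Sub \<psi> G))\<^sup>* \<subseteq> (S\<^sup>*)\<^sup>*" by (rule rtrancl_mono)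
    then show "(S \<union> Id_on (pre_verts Sub \<psi> G))\<^sup>* \<subseteq> S\<^sup>*" by simp
    show "S\<^sup>* \<subseteq> (S \<union> Id_on (pre_verts Sub \<psi> G))\<^sup>*" by (rule rtrancl_mono) auto
  qed
  then show ?thesis unfolding glue_rel_def S_def Let_def by (simp add: sup_assoc)
qed

lemma glue_same: "glue_rel Sub \<psi> H = glue_rel Sub \<psi> G"
  by (simp only: glue_indep)

lemma cls_same: "cls Sub \<psi> H x = cls Sub \<psi> G x"
  unfolding cls_def using glue_same[of Sub \<psi> H G] by simp

lemma mono_T:
  assumes "verts H \<subseteq> verts G" "adj H \<subseteq> adj G"
  shows "adj (transform Sub \<psi> H) \<subseteq> adj (transform Sub \<psi> G)"
proof -
  have pv: "pre_verts Sub \<psi> H \<subseteq> pre_verts Sub \<psi> G"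
    using assms unfolding pre_verts_def by auto
  have pa: "pre_adj Sub \<psi> H \<subseteq> pre_adj Sub \<psi> G"
    using assms unfolding pre_adj_def img_graph_def by auto
  have q: "pre_verts Sub \<psi> H // glue_rel Sub \<psi> H \<subseteq> pre_verts Sub \<psi> G // glue_rel Sub \<psi> G"
    using pv unfolding glue_same[of Sub \<psi> H G] quotient_def by auto
  show ?thesis unfolding transform_def Let_def using q pa by auto
qed

lemma cls_in:
  assumes "x \<in> verts G - deleted Sub \<psi>"
  shows "cls Sub \<psi> G x \<in> verts (transform Sub \<psi> G)"
  using assms unfolding transform_def Let_def cls_def quotient_def pre_verts_def by auto

lemma Inl_cls: "Inl x \<in> cls Sub \<psi> G x"
  unfolding cls_def glue_indep by auto

lemma edge_T:
  assumes "valid_subst Sub"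
    and "x \<in> verts G - deleted Sub \<psi>" "y \<in> verts G - deleted Sub \<psi>"
    and "(x, y) \<in> adj G" "\<not> (x \<in> Psi Sub \<psi> \<and> y \<in> Psi Sub \<psi>)"
  shows "(cls Sub \<psi> G x, cls Sub \<psi> G y) \<in> adj (transform Sub \<psi> G)"
proof -
  have "adj (Gam Sub) \<subseteq> verts (Gam Sub) \<times> verts (Gam Sub)"
    using assms(1) unfolding valid_subst_def simple_def by auto
  then have "(x, y) \<notin> adj (img_graph \<psi> (Gam Sub) G)"
    using assms(5) unfolding img_graph_def Psi_def by auto
  then have "(Inl x, Inl y) \<in> pre_adj Sub \<psi> G"
    using assms(2-4) unfolding pre_adj_def by auto
  then show ?thesis
    using cls_in[OF assms(2)] cls_in[OF assms(3)] Inl_cls[of x Sub \<psi> G] Inl_cls[of y Sub \<psi> G]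
    unfolding transform_def Let_def by fastforce
qed


lemma ball_dist:
  fixes Sub :: "('g,'b,'s) subst" and G :: "(nat,'s) sgraph"
  assumes vs: "valid_subst Sub" and cg: "connected_g (Gam Sub)"
    and rc: "\<And>(H::(nat,'s) sgraph). is_graph H \<and> applicable Sub \<psi> H \<Longrightarrow> connected_g (transform Sub \<psi> H)"
    and gc: "in_GC n G" and ap: "applicable Sub \<psi> G"
    and a: "a \<in> ballset Sub \<psi> G - deleted Sub \<psi>"
    and b: "b \<in> ballset Sub \<psi> G - deleted Sub \<psi>"
  shows "\<exists>m \<le> (card (verts (Gam Sub)) * (n+1) + card (verts (Gam' Sub)))^2.
           (cls Sub \<psi> G a, cls Sub \<psi> G b) \<in> adj (transform Sub \<psi> G) ^^ m"
proof -
  obtain \<Gamma>1 where sg: "spin_subgraph \<Gamma>1 G" and iso: "spin_iso \<psi> (Gam Sub) \<Gamma>1"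
    using ap unfolding applicable_def by blast
  have bij: "bij_betw \<psi> (verts (Gam Sub)) (verts \<Gamma>1)" using iso unfolding spin_iso_def by blast
  have PsiV: "Psi Sub \<psi> = verts \<Gamma>1" using bij unfolding Psi_def bij_betw_def by blast
  have isg: "is_graph G" using gc unfolding in_GC_def by blast
  have simpG: "simple G" using isg unfolding is_graph_def by blast
  have adjG: "adj G \<subseteq> verts G \<times> verts G" "sym (adj G)" "irrefl (adj G)"
    using simpG unfolding simple_def by auto
  have PsiG: "Psi Sub \<psi> \<subseteq> verts G" using sg PsiV unfolding spin_subgraph_def by blast
  define P where "P = Psi Sub \<psi>"
  define B where "B = ballset Sub \<psi> G"
  have B_eq: "B = P \<union> (\<Union>p\<in>P. nbrs G p)" unfolding B_def P_def ballset_def by simp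
  have BG: "B \<subseteq> verts G" using PsiG adjG(1) unfolding B_eq P_def nbrs_def by auto
  have PB: "P \<subseteq> B" unfolding B_eq by auto
  define H :: "(nat,'s) sgraph" where
    "H = \<lparr>verts = B, adj = adj G \<inter> ((P \<times> B) \<union> (B \<times> P)), spin = spin G\<rparr>"
  have simpGam: "adj (Gam Sub) \<subseteq> verts (Gam Sub) \<times> verts (Gam Sub)"
    using vs unfolding valid_subst_def simple_def by blast
  have simpH: "simple H"
  proof -
    have "adj H \<subseteq> verts H \<times> verts H" using PB unfolding H_def by auto
    moreover have "sym (adj H)" using adjG(2) unfolding H_def sym_def by auto
    moreover have "irrefl (adj H)" using adjG(3) unfolding H_def irrefl_def by auto
    ultimately show ?thesis unfolding simple_def by blast
  qed
  have pathPsi: "(\<psi> u, \<psi> v) \<in> (adj H)\<^sup>*" if "u \<in> verts (Gam Sub)" "v \<in> verts (Gam Sub)" for u v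
  proof -
    have "(u, v) \<in> (adj (Gam Sub))\<^sup>*" using cg that unfolding connected_g_def by blast
    then show ?thesis
    proof (induction rule: rtrancl_induct)
      case base then show ?case by simp
    next
      case (step w z)
      have wz: "w \<in> verts (Gam Sub)" "z \<in> verts (Gam Sub)" using step(2) simpGam by auto
      have "(\<psi> w, \<psi> z) \<in> adj \<Gamma>1" using iso step(2) wz unfolding spin_iso_def by blast
      then have "(\<psi> w, \<psi> z) \<in> adj G" using sg unfolding spin_subgraph_def by blast
      moreover have "\<psi> w \<in> P" "\<psi> z \<in> P" using wz unfolding P_def Psi_def by auto
      ultimately have "(\<psi> w, \<psi> z) \<in> adj H" using PB unfolding H_def by auto
      then show ?case using step(3) by (meson rtrancl.rtrancl_into_rtrancl)
    qed
  qed
  have toP: "\<exists>p\<in>P. (p, y) \<in> (adj H)\<^sup>* \<and> (y, p) \<in> (adj H)\<^sup>*" if yB: "y \<in> B" for y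
  proof (cases "y \<in> P")
    case True then show ?thesis by blast
  next
    case False
    then obtain p where p: "p \<in> P" "(p, y) \<in> adj G" using yB unfolding B_eq nbrs_def by auto
    then have "(y, p) \<in> adj G" using adjG(2) unfolding sym_def by blast
    then have "(p, y) \<in> adj H" "(y, p) \<in> adj H" using p yB PB unfolding H_def by auto
    then show ?thesis using p by blast
  qed
  have conH: "connected_g H"
    unfolding connected_g_def
  proof (intro ballI)
    fix x y assume "x \<in> verts H" "y \<in> verts H"
    then have "x \<in> B" "y \<in> B" unfolding H_def by auto
    then obtain p q where pq: "p \<in> P" "q \<in> P" "(x, p) \<in> (adj H)\<^sup>*" "(q, y) \<in> (adj H)\<^sup>*"
      using toP by blast
    obtain u v where "u \<in> verts (Gam Sub)" "v \<in> verts (Gam Sub)" "p = \<psi> u" "q = \<psi> v"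
      using pq(1,2) unfolding P_def Psi_def by auto
    then have "(p, q) \<in> (adj H)\<^sup>*" using pathPsi by blast
    then show "(x, y) \<in> (adj H)\<^sup>*" using pq(3,4) by (meson rtrancl_trans)
  qed
  have finH: "\<forall>x\<in>verts H. finite (nbrs H x)"
  proof
    fix x assume "x \<in> verts H"
    then have "x \<in> verts G" using BG unfolding H_def by auto
    then have "finite (nbrs G x)" using isg unfolding is_graph_def by blast
    moreover have "nbrs H x \<subseteq> nbrs G x" unfolding H_def nbrs_def by auto
    ultimately show "finite (nbrs H x)" by (rule finite_subset[rotated])
  qed
  have igH: "is_graph H" using simpH conH finH unfolding is_graph_def by blast
  define \<Gamma>2 :: "(nat,'s) sgraph" where "\<Gamma>2 = \<lparr>verts = P, adj = adj \<Gamma>1 \<inter> (P \<times> P), spin = spin \<Gamma>1\<rparr>"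
  have "spin_subgraph \<Gamma>2 H"
    using sg PB PsiV unfolding spin_subgraph_def \<Gamma>2_def H_def P_def by auto
  moreover have "spin_iso \<psi> (Gam Sub) \<Gamma>2"
    using iso PsiV unfolding spin_iso_def \<Gamma>2_def P_def Psi_def by auto
  ultimately have apH: "applicable Sub \<psi> H" unfolding applicable_def by blast
  have conT: "connected_g (transform Sub \<psi> H)" using rc igH apH by blast
  have aH: "a \<in> verts H - deleted Sub \<psi>" "b \<in> verts H - deleted Sub \<psi>"
    using a b unfolding H_def B_def by auto
  have rt: "(cls Sub \<psi> G a, cls Sub \<psi> G b) \<in> (adj (transform Sub \<psi> H))\<^sup>*"
    using conT cls_in[OF aH(1)] cls_in[OF aH(2)] cls_same[of Sub \<psi> H _ G]
    unfolding connected_g_def by metis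
  define M where "M = card (verts (Gam Sub)) * (n+1) + card (verts (Gam' Sub))"
  have finGam: "finite (verts (Gam Sub))" "finite (verts (Gam' Sub))"
    using vs unfolding valid_subst_def by auto
  have finP: "finite P" unfolding P_def Psi_def using finGam by simp
  have cP: "card P \<le> card (verts (Gam Sub))" unfolding P_def Psi_def by (rule card_image_le[OF finGam(1)])
  have nbfin: "finite (nbrs G p)" "card (nbrs G p) \<le> n" if "p \<in> P" for p
  proof -
    have "p \<in> verts G" using that PsiG unfolding P_def by auto
    then show "finite (nbrs G p)" "card (nbrs G p) \<le> n"
      using isg gc unfolding is_graph_def in_GC_def deg_def by auto
  qed
  have finB: "finite B" unfolding B_eq using finP nbfin by auto
  have "card B \<le> card P + card (\<Union>p\<in>P. nbrs G p)" unfolding B_eq by (rule card_Un_le)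
  also have "card (\<Union>p\<in>P. nbrs G p) \<le> (\<Sum>p\<in>P. card (nbrs G p))" by (rule card_UN_le[OF finP])
  also have "(\<Sum>p\<in>P. card (nbrs G p)) \<le> (\<Sum>p\<in>P. n)" by (rule sum_mono) (use nbfin in auto)
  also have "(\<Sum>p\<in>P. n) = card P * n" by simp
  finally have cB: "card B \<le> card P * (n+1)" by simp
  have finPV: "finite (pre_verts Sub \<psi> H)" unfolding pre_verts_def H_def using finB finGam by auto
  have "card (pre_verts Sub \<psi> H) \<le> card (Inl ` (B - deleted Sub \<psi>) :: (nat + 'b) set) + card (Inr ` verts (Gam' Sub) :: (nat + 'b) set)"
    unfolding pre_verts_def H_def by (simp add: card_Un_le)
  also have "\<dots> \<le> card (B - deleted Sub \<psi>) + card (verts (Gam' Sub))"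
    by (intro add_mono card_image_le) (use finB finGam in auto)
  also have "\<dots> \<le> card B + card (verts (Gam' Sub))"
    using finB by (simp add: card_mono)
  finally have cPV: "card (pre_verts Sub \<psi> H) \<le> M"
    unfolding M_def using cB cP by (meson add_le_mono1 le_trans mult_le_mono1)
  define VT where "VT = verts (transform Sub \<psi> H)"
  have VT_eq: "VT = (\<lambda>x. glue_rel Sub \<psi> H `` {x}) ` pre_verts Sub \<psi> H"
    unfolding VT_def transform_def Let_def quotient_def by auto
  have finVT: "finite VT" unfolding VT_eq using finPV by simp
  have cVT: "card VT \<le> M" unfolding VT_eq using card_image_le[OF finPV] cPV le_trans by blast
  have adjVT: "adj (transform Sub \<psi> H) \<subseteq> VT \<times> VT"
    unfolding VT_def transform_def Let_def by auto
  have finA: "finite (adj (transform Sub \<psi> H))" using adjVT finVT finite_subset by blast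
  have cA: "card (adj (transform Sub \<psi> H)) \<le> M^2"
  proof -
    have "card (adj (transform Sub \<psi> H)) \<le> card (VT \<times> VT)"
      by (rule card_mono) (use adjVT finVT in auto)
    also have "\<dots> = card VT * card VT" by (simp add: card_cartesian_product)
    also have "\<dots> \<le> M * M" using cVT by (simp add: mult_le_mono)
    finally show ?thesis by (simp add: power2_eq_square)
  qed
  obtain m where m: "m \<le> card (adj (transform Sub \<psi> H))"
    "(cls Sub \<psi> G a, cls Sub \<psi> G b) \<in> adj (transform Sub \<psi> H) ^^ m"
    using rt rtrancl_finite_eq_relpow[OF finA] by blast
  have "adj (transform Sub \<psi> H) \<subseteq> adj (transform Sub \<psi> G)"
    by (rule mono_T) (use BG in \<open>auto simp: H_def\<close>)
  then have "(cls Sub \<psi> G a, cls Sub \<psi> G b) \<in> adj (transform Sub \<psi> G) ^^ m"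
    using m(2) relpow_mono_sub by blast
  then show ?thesis using m(1) cA unfolding M_def by (meson le_trans)
qed


lemma walk_bound:
  fixes Sub :: "('g,'b,'s) subst" and G :: "(nat,'s) sgraph"
  assumes vs: "valid_subst Sub" and simpG: "simple G"
    and x: "x \<in> verts G - deleted Sub \<psi>"
    and ballK: "\<And>a b. a \<in> ballset Sub \<psi> G - deleted Sub \<psi> \<Longrightarrow> b \<in> ballset Sub \<psi> G - deleted Sub \<psi> \<Longrightarrow>
        \<exists>m\<le>K. (cls Sub \<psi> G a, cls Sub \<psi> G b) \<in> adj (transform Sub \<psi> G) ^^ m"
    and walk: "(x, y) \<in> adj G ^^ k" and y: "y \<notin> deleted Sub \<psi>"
  shows "\<exists>m\<le>k+K. (cls Sub \<psi> G x, cls Sub \<psi> G y) \<in> adj (transform Sub \<psi> G) ^^ m"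
proof -
  define AT where "AT = adj (transform Sub \<psi> G)"
  define c where "c = cls Sub \<psi> G"
  define D where "D = deleted Sub \<psi>"
  define P where "P = Psi Sub \<psi>"
  define Bl where "Bl = ballset Sub \<psi> G"
  define dl where "dl = (\<lambda>A B k. \<exists>m\<le>k. (A, B) \<in> AT ^^ m)"
  have dl_trans: "dl A C (k + l)" if h: "dl A B k" "dl B C l" for A B C k l
  proof -
    obtain m1 m2 where "m1 \<le> k" "(A, B) \<in> AT ^^ m1" "m2 \<le> l" "(B, C) \<in> AT ^^ m2"
      using h unfolding dl_def by blast
    then have "(A, C) \<in> AT ^^ (m1 + m2)" "m1 + m2 \<le> k + l" by (auto simp: relpow_add)
    then show ?thesis unfolding dl_def by blast
  qed
  have dl_0: "dl A A 0" for A unfolding dl_def by auto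
  have dl_edge: "dl A B 1" if "(A, B) \<in> AT" for A B
    unfolding dl_def using that by (intro exI[of _ 1]) auto
  have dl_mono: "dl A B l" if "dl A B k" "k \<le> l" for A B k l
    using that unfolding dl_def by (meson le_trans)
  have adjG: "adj G \<subseteq> verts G \<times> verts G" "sym (adj G)"
    using simpG unfolding simple_def by auto
  have DP: "D \<subseteq> P" unfolding D_def P_def deleted_def Psi_def by auto
  have PBl: "P \<subseteq> Bl" unfolding P_def Bl_def ballset_def by auto
  have nbB: "w \<in> Bl" if "v \<in> P" "(v, w) \<in> adj G" for v w
    using that unfolding P_def Bl_def ballset_def nbrs_def by auto
  have edge: "dl (c v) (c w) 1" if "v \<in> verts G" "w \<in> verts G" "v \<notin> D" "w \<notin> D"
      "(v, w) \<in> adj G" "\<not> (v \<in> P \<and> w \<in> P)" for v w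
    using edge_T[OF vs, of v G \<psi> w] that dl_edge unfolding c_def D_def P_def AT_def by auto
  have bK: "dl (c a) (c b) K" if "a \<in> Bl - D" "b \<in> Bl - D" for a b
    using ballK that unfolding dl_def c_def AT_def Bl_def D_def by blast
  define Q where "Q = (\<lambda>k y. (y \<notin> D \<and> dl (c x) (c y) k) \<or>
     (\<exists>a\<in>Bl - D. \<exists>k1. dl (c x) (c a) k1 \<and> ((y \<in> P \<and> k1 \<le> k) \<or>
        (\<exists>b\<in>Bl - D. \<exists>k3. y \<notin> D \<and> dl (c b) (c y) k3 \<and> k1 + k3 \<le> k))))"
  have "\<forall>y. (x, y) \<in> adj G ^^ k \<longrightarrow> Q k y"
  proof (induction k)
    case 0
    then show ?case using x dl_0 unfolding Q_def D_def by auto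
  next
    case (Suc k)
    show ?case
    proof (intro allI impI)
      fix y assume "(x, y) \<in> adj G ^^ Suc k"
      then obtain z where xz: "(x, z) \<in> adj G ^^ k" and zy: "(z, y) \<in> adj G" by auto
      have zyV: "z \<in> verts G" "y \<in> verts G" using zy adjG(1) by auto
      have yz: "(y, z) \<in> adj G" using zy adjG(2) unfolding sym_def by blast
      have Qz: "Q k z" using Suc xz by blast
      show "Q (Suc k) y"
      proof (cases "z \<notin> D \<and> dl (c x) (c z) k")
        case True
        show ?thesis
        proof (cases "y \<notin> D \<and> \<not> (z \<in> P \<and> y \<in> P)")
          case True2: True
          then have "dl (c z) (c y) 1" using edge zyV zy True by blast
          then have "dl (c x) (c y) (k + 1)" using dl_trans True by blast
          then show ?thesis using True2 unfolding Q_def by simp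
        next
          case False
          then have yP: "y \<in> P" using DP by blast
          then have "z \<in> Bl" using nbB yz by blast
          then show ?thesis unfolding Q_def using True yP
            by (intro disjI2 bexI[of _ z] exI[of _ k]) auto
        qed
      next
        case False
        then obtain a k1 where a: "a \<in> Bl - D" "dl (c x) (c a) k1" and
          rest: "(z \<in> P \<and> k1 \<le> k) \<or> (\<exists>b\<in>Bl - D. \<exists>k3. z \<notin> D \<and> dl (c b) (c z) k3 \<and> k1 + k3 \<le> k)"
          using Qz unfolding Q_def by blast
        show ?thesis
        proof (cases "y \<in> P")
          case True
          have "k1 \<le> Suc k" using rest by auto
          then show ?thesis unfolding Q_def using a True by blast
        next
          case yP: False
          then have yD: "y \<notin> D" using DP by blast
          from rest show ?thesis
          proof
            assume zP: "z \<in> P \<and> k1 \<le> k"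
            then have "y \<in> Bl" using nbB zy by blast
            then show ?thesis unfolding Q_def using a yD dl_0 zP
              by (intro disjI2 bexI[OF _ a(1)] exI[of _ k1]) (auto intro!: bexI[of _ y] exI[of _ 0])
          next
            assume "\<exists>b\<in>Bl - D. \<exists>k3. z \<notin> D \<and> dl (c b) (c z) k3 \<and> k1 + k3 \<le> k"
            then obtain b k3 where b: "b \<in> Bl - D" "z \<notin> D" "dl (c b) (c z) k3" "k1 + k3 \<le> k" by blast
            have "dl (c z) (c y) 1" using edge zyV zy b(2) yD yP by blast
            then have "dl (c b) (c y) (k3 + 1)" using dl_trans b(3) by blast
            then show ?thesis unfolding Q_def using a b yD
              by (intro disjI2 bexI[OF _ a(1)] exI[of _ k1]) (auto intro!: bexI[of _ b] exI[of _ "k3+1"])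
          qed
        qed
      qed
    qed
  qed
  then have Qy: "Q k y" using walk by blast
  have yD: "y \<notin> D" using y unfolding D_def .
  have "dl (c x) (c y) (k + K)"
  proof -
    consider (A) "dl (c x) (c y) k" | (B) a k1 where "a \<in> Bl - D" "dl (c x) (c a) k1" "y \<in> P" "k1 \<le> k"
      | (C) a k1 b k3 where "a \<in> Bl - D" "dl (c x) (c a) k1" "b \<in> Bl - D" "dl (c b) (c y) k3" "k1 + k3 \<le> k"
      using Qy yD unfolding Q_def by blast
    then show ?thesis
    proof cases
      case A then show ?thesis using dl_mono by simp
    next
      case B
      have "y \<in> Bl - D" using B(3) PBl yD by blast
      then have "dl (c a) (c y) K" using bK B(1) by blast
      then have "dl (c x) (c y) (k1 + K)" using dl_trans B(2) by blast
      then show ?thesis using dl_mono B(4) by simp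
    next
      case C
      have "dl (c a) (c b) K" using bK C(1,3) by blast
      then have "dl (c x) (c y) (k1 + K + k3)" using dl_trans C(2,4) by blast
      then show ?thesis using dl_mono C(5) by simp
    qed
  qed
  then show ?thesis unfolding dl_def c_def AT_def by blast
qed


lemma gdist_fin:
  assumes "gdist G x y \<noteq> \<infinity>"
  shows "\<exists>k. gdist G x y = enat k \<and> (x, y) \<in> adj G ^^ k"
proof -
  define S where "S = {k. (x, y) \<in> adj G ^^ k}"
  have g: "gdist G x y = (INF k\<in>S. enat k)" unfolding gdist_def S_def ..
  have "S \<noteq> {}" using assms unfolding g by (auto simp: top_enat_def)
  then obtain k0 where k0: "k0 \<in> S" by blast
  define k where "k = (LEAST k. k \<in> S)"
  have kS: "k \<in> S" unfolding k_def using k0 by (rule LeastI)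
  have "(INF k\<in>S. enat k) = enat k"
  proof (rule antisym)
    show "(INF k\<in>S. enat k) \<le> enat k" using kS by (rule INF_lower)
    show "enat k \<le> (INF k\<in>S. enat k)"
      by (rule INF_greatest) (simp add: k_def Least_le)
  qed
  then show ?thesis using kS g unfolding S_def by auto
qed

lemma gdist_le:
  assumes "(x, y) \<in> adj G ^^ m"
  shows "gdist G x y \<le> enat m"
  unfolding gdist_def by (rule INF_lower) (use assms in auto)

lemma main_bound:
  fixes subs :: "('g, 'b, 's) subst list" and n :: nat
  assumes "\<forall>i<length subs. valid_subst (subs ! i)"
    and "local_grammar subs"
    and "respects_connectivity subs"
  shows "\<exists>C::nat. C > 0 \<and>
             (\<forall>(G :: (nat, 's) sgraph) i \<psi> x y.
                in_GC n G \<and> i < length subs \<and> applicable (subs ! i) \<psi> G \<and>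
                x \<in> verts G - deleted (subs ! i) \<psi> \<and> y \<in> verts G - deleted (subs ! i) \<psi> \<longrightarrow>
                gdist (transform (subs ! i) \<psi> G) (cls (subs ! i) \<psi> G x) (cls (subs ! i) \<psi> G y)
                  \<le> gdist G x y + enat C)"
proof -
  define M1 where "M1 = sum_list (map (\<lambda>s. card (verts (Gam s))) subs)"
  define M2 where "M2 = sum_list (map (\<lambda>s. card (verts (Gam' s))) subs)"
  define K where "K = (M1 * (n+1) + M2)^2"
  show "\<exists>C::nat. C > 0 \<and>
             (\<forall>(G :: (nat, 's) sgraph) i \<psi> x y.
                in_GC n G \<and> i < length subs \<and> applicable (subs ! i) \<psi> G \<and>
                x \<in> verts G - deleted (subs ! i) \<psi> \<and> y \<in> verts G - deleted (subs ! i) \<psi> \<longrightarrow>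
                gdist (transform (subs ! i) \<psi> G) (cls (subs ! i) \<psi> G x) (cls (subs ! i) \<psi> G y)
                  \<le> gdist G x y + enat C)"
  proof (intro exI[of _ "K+1"] conjI allI impI)
    show "0 < K + 1" by simp
    fix G :: "(nat, 's) sgraph" and i \<psi> x y
    assume h: "in_GC n G \<and> i < length subs \<and> applicable (subs ! i) \<psi> G \<and>
                x \<in> verts G - deleted (subs ! i) \<psi> \<and> y \<in> verts G - deleted (subs ! i) \<psi>"
    define Sub where "Sub = subs ! i"
    have gc: "in_GC n G" and il: "i < length subs" and ap: "applicable Sub \<psi> G"
      and x: "x \<in> verts G - deleted Sub \<psi>" and y: "y \<in> verts G - deleted Sub \<psi>"
      using h unfolding Sub_def by auto
    have vs: "valid_subst Sub" using assms(1) il unfolding Sub_def by blast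
    have cg: "connected_g (Gam Sub)" using assms(2) il unfolding Sub_def local_grammar_def by blast
    have rc0: "\<forall>\<psi> (H::(nat,'s) sgraph). is_graph H \<and> applicable Sub \<psi> H \<longrightarrow>
         connected_g (transform Sub \<psi> H)"
      using assms(3) il unfolding respects_connectivity_def Sub_def by simp
    note rc = rc0[rule_format]
    have c1: "card (verts (Gam Sub)) \<le> M1" unfolding M1_def Sub_def
      using il by (intro member_le_sum_list) auto
    have c2: "card (verts (Gam' Sub)) \<le> M2" unfolding M2_def Sub_def
      using il by (intro member_le_sum_list) auto
    have Kb: "(card (verts (Gam Sub)) * (n+1) + card (verts (Gam' Sub)))^2 \<le> K"
      unfolding K_def using c1 c2 by (intro power_mono add_mono mult_le_mono1) auto
    have ballK: "\<exists>m\<le>K. (cls Sub \<psi> G a, cls Sub \<psi> G b) \<in> adj (transform Sub \<psi> G) ^^ m"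
      if ab: "a \<in> ballset Sub \<psi> G - deleted Sub \<psi>" "b \<in> ballset Sub \<psi> G - deleted Sub \<psi>" for a b
    proof -
      obtain m where "m \<le> (card (verts (Gam Sub)) * (n+1) + card (verts (Gam' Sub)))^2"
        "(cls Sub \<psi> G a, cls Sub \<psi> G b) \<in> adj (transform Sub \<psi> G) ^^ m"
        using ball_dist[OF vs cg rc gc ap ab(1) ab(2)] by blast
      then show ?thesis using Kb by (intro exI[of _ m]) auto
    qed
    have simpG: "simple G" using gc unfolding in_GC_def is_graph_def by blast
    show "gdist (transform (subs ! i) \<psi> G) (cls (subs ! i) \<psi> G x) (cls (subs ! i) \<psi> G y)
                  \<le> gdist G x y + enat (K + 1)"
    proof (cases "gdist G x y = \<infinity>")
      case True then show ?thesis by simp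
    next
      case False
      then obtain k where k: "gdist G x y = enat k" "(x, y) \<in> adj G ^^ k" using gdist_fin[OF False] by blast
      obtain m where m: "m \<le> k + K" "(cls Sub \<psi> G x, cls Sub \<psi> G y) \<in> adj (transform Sub \<psi> G) ^^ m"
        using walk_bound[OF vs simpG x ballK k(2)] y by blast
      have "gdist (transform Sub \<psi> G) (cls Sub \<psi> G x) (cls Sub \<psi> G y) \<le> enat m"
        by (rule gdist_le[OF m(2)])
      also have "\<dots> \<le> enat k + enat (K + 1)" using m(1) by simp
      finally show ?thesis unfolding Sub_def k(1) .
    qed
  qed
qed

theorem lemma2:
  fixes subs :: "('g, 'b, 's) subst list"
    and G0 :: "(nat, 's) sgraph"
  assumes "\<forall>i<length subs. valid_subst (subs ! i)"
    and "local_grammar subs"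
    and "locally_bounded subs"
    and "respects_connectivity subs"
  shows "\<exists>N. \<forall>n\<ge>N. in_GC n G0 \<longrightarrow>
           (\<exists>C::nat. C > 0 \<and>
             (\<forall>(G :: (nat, 's) sgraph) i \<psi> x y.
                in_GC n G \<and> i < length subs \<and> applicable (subs ! i) \<psi> G \<and>
                x \<in> verts G - deleted (subs ! i) \<psi> \<and> y \<in> verts G - deleted (subs ! i) \<psi> \<longrightarrow>
                gdist (transform (subs ! i) \<psi> G) (cls (subs ! i) \<psi> G x) (cls (subs ! i) \<psi> G y)
                  \<le> gdist G x y + enat C))"
proof (rule exI[of _ 0], intro allI impI)
  fix n :: nat
  show "\<exists>C::nat. C > 0 \<and>
             (\<forall>(G :: (nat, 's) sgraph) i \<psi> x y.
                in_GC n G \<and> i < length subs \<and> applicable (subs ! i) \<psi> G \<and>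
                x \<in> verts G - deleted (subs ! i) \<psi> \<and> y \<in> verts G - deleted (subs ! i) \<psi> \<longrightarrow>
                gdist (transform (subs ! i) \<psi> G) (cls (subs ! i) \<psi> G x) (cls (subs ! i) \<psi> G y)
                  \<le> gdist G x y + enat C)"
    by (rule main_bound[OF assms(1,2,4)])
qed

end
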